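(* Let $a<b$, let $\alpha\in C^1([a,b],\,]0,1[)$, fix $n\in\mathbb{N}$ and an integer $N\ge n+1$, and let $x\in C^{n+1}([a,b],\mathbb{R})$. For $t\in\,]a,b]$ and $k\ge n+1$ let $V_k(t)=(k-n)\int_a^t(\tau-a)^{k-n-1}x(\tau)\,d\tau$, and define $$A(\alpha(t),k)=\frac{1}{\Gamma(k+1+\alpha(t))}\Big[1+\sum_{p=n+1-k}^{N}\frac{\Gamma(p-n-\alpha(t))}{\Gamma(-\alpha(t)-k)(p-n+k)!}\Big],\quad k=0,\dots,n,$$ $$B(\alpha(t),k)=\frac{\Gamma(k-n-\alpha(t))}{\Gamma(\alpha(t))\Gamma(1-\alpha(t))(k-n)!},\quad k\ge n+1.$$ Then for every $t\in\,]a,b]$, $${}_aI_t^{\alpha(t)}x(t)=(t-a)^{\alpha(t)}\Big[\sum_{k=0}^nA(\alpha(t),k)(t-a)^kx^{(k)}(t)+\sum_{k=n+1}^NB(\alpha(t),k)(t-a)^{n-k}V_k(t)\Big]+E_N(t),$$ where $$|E_N(t)|\le L_{n+1}(t)\frac{\exp\big((n+\alpha(t))^2+n+\alpha(t)\big)}{\Gamma(n+1+\alpha(t))(n+\alpha(t))N^{n+\alpha(t)}}(t-a)^{n+1+\alpha(t)},\qquad L_{n+1}(t)=\max_{\tau\in[a,t]}|x^{(n+1)}(\tau)|.$$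
   Context: For a function $\alpha:[a,b]\to\,]0,1[$ and $t\in[a,b]$, the left Riemann–Liouville fractional integral of variable order $\alpha(\cdot)$ is $${}_aI_t^{\alpha(t)}x(t)=\frac{1}{\Gamma(\alpha(t))}\int_a^t(t-\tau)^{\alpha(t)-1}x(\tau)\,d\tau.$$ *)

theory Defs
  imports "HOL-Analysis.Analysis"
begin

definition RL_left_integral :: "real \<Rightarrow> (real \<Rightarrow> real) \<Rightarrow> (real \<Rightarrow> real) \<Rightarrow> real \<Rightarrow> real" where
  "RL_left_integral a \<alpha> x t =
     (1 / Gamma (\<alpha> t)) * (LBINT \<tau>:{a..t}. (t - \<tau>) powr (\<alpha> t - 1) * x \<tau>)"

definition V_fun :: "real \<Rightarrow> (real \<Rightarrow> real) \<Rightarrow> nat \<Rightarrow> nat \<Rightarrow> real \<Rightarrow> real" where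
  "V_fun a x n k t = real (k - n) * (LBINT \<tau>:{a..t}. (\<tau> - a) ^ (k - n - 1) * x \<tau>)"

text \<open>A(alpha,k) for k = 0..n; the index p runs over the integers n+1-k .. N
  (all natural numbers, since k <= n).\<close>
definition A_coef :: "nat \<Rightarrow> nat \<Rightarrow> real \<Rightarrow> nat \<Rightarrow> real" where
  "A_coef n N al k =
     (1 / Gamma (real k + 1 + al)) *
     (1 + (\<Sum>p = n + 1 - k..N.
              Gamma (real p - real n - al) /
              (Gamma (- al - real k) * fact (p + k - n))))"

definition B_coef :: "nat \<Rightarrow> real \<Rightarrow> nat \<Rightarrow> real" where
  "B_coef n al k =
     Gamma (real k - real n - al) / (Gamma al * Gamma (1 - al) * fact (k - n))"

end

theory Submission
  imports Defs "HOL-Analysis.Analysis"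
begin


lemma telescope:
  fixes F G :: "nat \<Rightarrow> real"
  shows "(\<Sum>j\<le>m. (-1)^j * (F (Suc j) * G (m-j) + F j * G (Suc (m-j))))
         = F 0 * G (Suc m) + (-1)^m * F (Suc m) * G 0"
proof (induction m arbitrary: G)
  case 0 then show ?case by simp
next
  case (Suc m)
  have "(\<Sum>j\<le>m. (-1)^j * (F (Suc j) * G (Suc m - j) + F j * G (Suc (Suc m - j))))
      = (\<Sum>j\<le>m. (-1)^j * (F (Suc j) * (\<lambda>i. G (Suc i)) (m-j) + F j * (\<lambda>i. G (Suc i)) (Suc (m-j))))"
    by (intro sum.cong refl) (simp add: Suc_diff_le)
  also have "\<dots> = F 0 * G (Suc (Suc m)) + (-1)^m * F (Suc m) * G 1"
    using Suc.IH[of "\<lambda>i. G (Suc i)"] by simp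
  finally show ?case by (simp add: algebra_simps)
qed

lemma gen_ibp:
  fixes f g :: "nat \<Rightarrow> real \<Rightarrow> real" and a t :: real and m :: nat
  assumes at: "a \<le> t"
    and fc: "\<And>j. j \<le> m \<Longrightarrow> continuous_on {a..t} (f j)"
    and fd: "\<And>j \<tau>. j \<le> m \<Longrightarrow> \<tau> \<in> {a<..<t} \<Longrightarrow> (f j has_real_derivative f (Suc j) \<tau>) (at \<tau>)"
    and gc: "\<And>j. j \<le> Suc m \<Longrightarrow> continuous_on {a..t} (g j)"
    and gd: "\<And>j \<tau>. j \<le> m \<Longrightarrow> \<tau> \<in> {a<..<t} \<Longrightarrow> (g j has_real_derivative g (Suc j) \<tau>) (at \<tau>)"
  shows "((\<lambda>\<tau>. f (Suc m) \<tau> * g 0 \<tau>) has_integral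
     (-1)^m * ((\<Sum>j\<le>m. (-1)^j * (f j t * g (m-j) t - f j a * g (m-j) a))
               - integral {a..t} (\<lambda>\<tau>. f 0 \<tau> * g (Suc m) \<tau>))) {a..t}"
proof -
  define \<Phi> where "\<Phi> = (\<lambda>\<tau>. \<Sum>j\<le>m. (-1)^j * (f j \<tau> * g (m-j) \<tau>))"
  have cPhi: "continuous_on {a..t} \<Phi>"
    unfolding \<Phi>_def by (intro continuous_intros fc gc) auto
  have dPhi: "(\<Phi> has_vector_derivative (f 0 \<tau> * g (Suc m) \<tau> + (-1)^m * f (Suc m) \<tau> * g 0 \<tau>)) (at \<tau>)"
    if \<tau>: "\<tau> \<in> {a<..<t}" for \<tau>
  proof -
    have "(\<Phi> has_real_derivative (\<Sum>j\<le>m. (-1)^j * (f (Suc j) \<tau> * g (m-j) \<tau> + f j \<tau> * g (Suc (m-j)) \<tau>))) (at \<tau>)"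
      unfolding \<Phi>_def
    proof (intro DERIV_sum DERIV_cmult)
      fix j assume "j \<in> {..m}"
      then show "((\<lambda>x. f j x * g (m - j) x) has_real_derivative
          f (Suc j) \<tau> * g (m - j) \<tau> + f j \<tau> * g (Suc (m - j)) \<tau>) (at \<tau>)"
        using DERIV_mult'[OF fd[of j \<tau>] gd[of "m-j" \<tau>]] \<tau> by (simp add: algebra_simps)
    qed
    then show ?thesis
      using telescope[where m=m and F="\<lambda>j. f j \<tau>" and G="\<lambda>j. g j \<tau>"]
      by (simp add: has_real_derivative_iff_has_vector_derivative)
  qed
  have I1: "((\<lambda>\<tau>. f 0 \<tau> * g (Suc m) \<tau> + (-1)^m * f (Suc m) \<tau> * g 0 \<tau>) has_integral (\<Phi> t - \<Phi> a)) {a..t}"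
    by (rule fundamental_theorem_of_calculus_interior[OF at cPhi dPhi])
  have I2: "((\<lambda>\<tau>. f 0 \<tau> * g (Suc m) \<tau>) has_integral integral {a..t} (\<lambda>\<tau>. f 0 \<tau> * g (Suc m) \<tau>)) {a..t}"
    by (intro integrable_integral integrable_continuous_interval continuous_intros fc gc) auto
  have I3: "((\<lambda>\<tau>. (-1)^m * f (Suc m) \<tau> * g 0 \<tau>) has_integral (\<Phi> t - \<Phi> a - integral {a..t} (\<lambda>\<tau>. f 0 \<tau> * g (Suc m) \<tau>))) {a..t}"
    using has_integral_diff[OF I1 I2] by simp
  have I4: "((\<lambda>\<tau>. (-1)^m * ((-1)^m * f (Suc m) \<tau> * g 0 \<tau>)) has_integral (-1)^m * (\<Phi> t - \<Phi> a - integral {a..t} (\<lambda>\<tau>. f 0 \<tau> * g (Suc m) \<tau>))) {a..t}"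
    by (rule has_integral_mult_right[OF I3])
  have e: "(-1::real)^m * (-1)^m = 1" by (simp add: power_mult_distrib[symmetric])
  show ?thesis
    using I4 unfolding \<Phi>_def
    by (simp add: mult.assoc[symmetric] e sum_subtractf[symmetric] right_diff_distrib)
qed


lemma notInt_plus:
  fixes al r :: real
  assumes "0 < al" "al < 1" "r \<in> \<int>"
  shows "r + al \<notin> \<int>"
proof
  assume "r + al \<in> \<int>"
  then have "(r + al) - r \<in> \<int>" using assms(3) by (intro Ints_diff)
  then have "al \<in> \<int>" by simp
  then obtain k where "al = of_int k" by (auto elim: Ints_cases)
  with assms show False by auto
qed

lemma notInt_minus:
  fixes al r :: real
  assumes "0 < al" "al < 1" "r \<in> \<int>"
  shows "r - al \<notin> \<int>"
proof
  assume "r - al \<in> \<int>"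
  moreover have "al = r - (r - al)" by simp
  ultimately have "al \<in> \<int>" using assms(3) by (metis Ints_diff)
  then obtain k where "al = of_int k" by (auto elim: Ints_cases)
  with assms show False by auto
qed

lemma SN_aux:
  fixes P F be :: real and N :: nat
  assumes "be + 1 \<noteq> 0" "F > 0"
  shows "P / (F * (be + 1)) - P / F / (real (Suc N) + 1) = P * (real N + 1 - be) / (F * (real N + 2) * (be+1))"
proof -
  have "real N + 2 \<noteq> 0" by simp
  then show ?thesis using assms by (simp add: divide_simps) (simp add: algebra_simps)
qed

lemma notNonpos: "(x::real) \<notin> \<int> \<Longrightarrow> x \<notin> \<int>\<^sub>\<le>\<^sub>0"
  using nonpos_Ints_subset_Ints by blast

lemma GR:
  fixes z :: real
  assumes "z \<notin> \<int>\<^sub>\<le>\<^sub>0"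
  shows "Gamma (z + real m) = pochhammer z m * Gamma z"
  using pochhammer_Gamma[OF assms, of m] assms by (simp add: Gamma_eq_zero_iff)

lemma Qlem:
  fixes be :: real
  assumes "be \<notin> \<int>"
  shows "(-1)^j * pochhammer (-be) j * Gamma (be - real j + 1) = Gamma (be + 1)"
proof -
  have z: "be - real j + 1 \<notin> \<int>\<^sub>\<le>\<^sub>0"
  proof (rule notNonpos, rule)
    assume "be - real j + 1 \<in> \<int>"
    then have "(be - real j + 1) + (real j - 1) \<in> \<int>" by (intro Ints_add) auto
    with assms show False by simp
  qed
  have "(-1::real)^j * pochhammer (-be) j = pochhammer (be - real j + 1) j"
    by (simp add: pochhammer_minus mult.assoc[symmetric] power_mult_distrib[symmetric])
  then show ?thesis using GR[OF z, of j] by simp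
qed

lemma SN:
  fixes be :: real
  assumes "be + 1 \<noteq> 0"
  shows "1/(be+1) - (\<Sum>p\<le>N. pochhammer (-be) p / fact p / (real p + 1))
       = pochhammer (-be) (Suc N) / (fact (Suc N) * (be + 1))"
proof (induction N)
  case 0 then show ?case using assms by (simp add: field_simps)
next
  case (Suc N)
  have "1/(be+1) - (\<Sum>p\<le>Suc N. pochhammer (-be) p / fact p / (real p + 1))
      = pochhammer (-be) (Suc N) / (fact (Suc N) * (be + 1)) - pochhammer (-be) (Suc N) / fact (Suc N) / (real (Suc N) + 1)"
    using Suc by simp
  also have "\<dots> = pochhammer (-be) (Suc N) * (real N + 1 - be) / (fact (Suc N) * (real N + 2) * (be+1))"
    by (rule SN_aux) (use assms in auto)
  also have "\<dots> = pochhammer (-be) (Suc (Suc N)) / (fact (Suc (Suc N)) * (be + 1))"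
    by (simp add: pochhammer_rec' fact_Suc[of "Suc N"] algebra_simps)
  finally show ?case .
qed


lemma poch_mono:
  fixes x y :: real
  assumes "0 \<le> x" "x \<le> y"
  shows "pochhammer x n \<le> pochhammer y n"
  unfolding pochhammer_prod using assms by (intro prod_mono) auto

lemma Tbase:
  fixes be :: real
  assumes "real n < be" "be < real n + 1"
  shows "\<bar>pochhammer (-be) (Suc n)\<bar> \<le> be * fact n"
proof -
  have "pochhammer (-be) (Suc n) = (-1)^(Suc n) * pochhammer (be - real n) (Suc n)"
    by (simp add: pochhammer_minus)
  then have "\<bar>pochhammer (-be) (Suc n)\<bar> = \<bar>pochhammer (be - real n) (Suc n)\<bar>"
    by (simp add: abs_mult)
  also have "\<dots> = pochhammer (be - real n) (Suc n)"
    using assms by (intro abs_of_nonneg pochhammer_nonneg) auto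
  also have "\<dots> = be * pochhammer (be - real n) n"
    by (simp add: pochhammer_rec')
  also have "\<dots> \<le> be * pochhammer 1 n"
    using assms by (intro mult_left_mono poch_mono) auto
  finally show ?thesis by (simp add: pochhammer_fact)
qed

lemma bern:
  fixes M c :: real
  assumes "M > 0" "c \<ge> 0"
  shows "1 - c / M \<le> (M / (M + 1)) powr c"
proof -
  have "(M / (M + 1)) powr c = exp (c * ln (M / (M+1)))"
    using assms by (simp add: powr_def)
  also have "ln (M / (M+1)) = - ln (1 + 1/M)"
    using assms by (simp add: ln_div field_simps)
  finally have e: "(M / (M + 1)) powr c = exp (- (c * ln (1 + 1/M)))" by simp
  have "ln (1 + 1/M) \<le> 1/M" using assms by (intro ln_add_one_self_le_self) auto
  then have "c * ln (1 + 1/M) \<le> c / M" using assms mult_left_mono by fastforce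
  then have h1: "exp (- (c / M)) \<le> exp (- (c * ln (1 + 1/M)))" by simp
  have h2: "1 - c / M \<le> exp (- (c / M))" using exp_ge_add_one_self[of "- (c/M)"] by simp
  show ?thesis unfolding e using order_trans[OF h2 h1] .
qed

lemma Tbound:
  fixes be :: real
  assumes "real n < be" "be < real n + 1" "n \<le> N"
  shows "\<bar>pochhammer (-be) (Suc N)\<bar> / fact (Suc N)
         \<le> be / (real n + 1) * ((real n + 2) / (real N + 2)) powr (be + 1)"
  using assms(3)
proof (induction N rule: dec_induct)
  case base
  have "\<bar>pochhammer (-be) (Suc n)\<bar> / fact (Suc n) \<le> be * fact n / fact (Suc n)"
    using Tbase[OF assms(1,2)] by (intro divide_right_mono) auto
  also have "\<dots> = be / (real n + 1)"
  proof -
    have "(fact (Suc n)::real) = (real n + 1) * fact n" by (simp add: algebra_simps)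
    then show ?thesis by simp
  qed
  finally show ?case using assms by simp
next
  case (step N)
  have be0: "be > 0" using assms(1) by linarith
  have "pochhammer (-be) (Suc (Suc N)) = (-be + real (Suc N)) * pochhammer (-be) (Suc N)"
    by (rule pochhammer_rec')
  moreover have "-be + real (Suc N) = real N + 1 - be" by simp
  moreover have "real N + 1 - be > 0" using step(1) assms(2) by linarith
  ultimately have ab: "\<bar>pochhammer (-be) (Suc (Suc N))\<bar> = (real N + 1 - be) * \<bar>pochhammer (-be) (Suc N)\<bar>"
    by (simp add: abs_mult)
  have "\<bar>pochhammer (-be) (Suc (Suc N))\<bar> / fact (Suc (Suc N))
      = (\<bar>pochhammer (-be) (Suc N)\<bar> / fact (Suc N)) * (1 - (be + 1) / (real N + 2))"
    unfolding ab by (simp add: field_simps)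
  also have "\<dots> \<le> (be / (real n + 1) * ((real n + 2) / (real N + 2)) powr (be + 1)) * ((real N + 2) / (real N + 2 + 1)) powr (be + 1)"
  proof (rule mult_mono[OF step(3)])
    show "1 - (be + 1) / (real N + 2) \<le> ((real N + 2) / (real N + 2 + 1)) powr (be + 1)"
      using be0 by (intro bern) auto
    show "0 \<le> be / (real n + 1) * ((real n + 2) / (real N + 2)) powr (be + 1)" using be0 by simp
    have "be + 1 \<le> real N + 2" using step(1) assms(2) by linarith
    then show "0 \<le> 1 - (be + 1) / (real N + 2)" by simp
  qed
  also have "\<dots> = be / (real n + 1) * (((real n + 2) / (real N + 2)) * ((real N + 2) / (real N + 2 + 1))) powr (be + 1)"
    by (subst powr_mult) auto
  also have "((real n + 2) / (real N + 2)) * ((real N + 2) / (real N + 2 + 1)) = (real n + 2) / (real (Suc N) + 2)"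
  proof -
    have "real N + 2 \<noteq> 0" "real N + 2 + 1 \<noteq> 0" by linarith+
    then show ?thesis by (simp add: add.commute)
  qed
  finally show ?case .
qed

lemma exp_sq_bound:
  fixes x :: real
  assumes "x \<ge> 0"
  shows "(1 + x/2)^2 \<le> exp x"
proof -
  have "1 + x/2 \<le> exp (x/2)" using exp_ge_add_one_self[of "x/2"] by simp
  then have "(1 + x/2)^2 \<le> (exp (x/2))^2" using assms by (intro power_mono) auto
  also have "(exp (x/2))^2 = exp x" by (simp add: exp_double[symmetric])
  finally show ?thesis .
qed

lemma canc: "(Z::real) \<noteq> 0 \<Longrightarrow> A * Q * Z / (B * (Z * W)) = A * Q / (B * W)"
  by (simp add: field_simps)

lemma canc2: "(U::real) \<noteq> 0 \<Longrightarrow> V \<noteq> 0 \<Longrightarrow> A * (2 * U * V) * Q / (U * B * V) = 2 * A * Q / B"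
  by (simp add: field_simps)

lemma final_num:
  fixes be :: real
  assumes "real n < be" "be < real n + 1" "n + 1 \<le> N"
  shows "be / (real n + 1) * ((real n + 2) / (real N + 2)) powr (be + 1) / (be + 1)
         \<le> exp (be^2 + be) / (be * real N powr be)"
proof -
  have be0: "be > 0" using assms(1) by linarith
  have N1: "real N \<ge> 1" using assms(3) by simp
  have Nb: "real N powr be > 0" using N1 by simp
  define c where "c = be + 1"
  have p1: "((real n + 2) / (real N + 2)) powr c = (real n + 2) powr c / (real N + 2) powr c"
    by (simp add: powr_divide)
  have p2: "(real N + 2) powr c = (real N + 2) powr be * (real N + 2)"
    unfolding c_def by (simp add: powr_add)
  have p3: "real N powr be \<le> (real N + 2) powr be"
    using be0 by (intro powr_mono2) auto
  have p4: "(real n + 2) powr c = (real n + 2)^2 * (real n + 2) powr (be - 1)"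
  proof -
    have "c = 2 + (be - 1)" unfolding c_def by simp
    then have "(real n + 2) powr c = (real n + 2) powr (2 + (be - 1))" by simp
    also have "\<dots> = (real n + 2) powr 2 * (real n + 2) powr (be - 1)" by (rule powr_add)
    also have "(real n + 2) powr 2 = (real n + 2)^2" by (rule powr_numeral) simp
    finally show ?thesis .
  qed
  have p5: "(real n + 2)^2 \<le> 2 * (real n + 1) * (real n + 3)"
    by (simp add: power2_eq_square algebra_simps)
  have key: "2 * be^2 * (real n + 2) powr (be - 1) \<le> (be + 1) * exp (be^2 + be)"
  proof (cases "n = 0")
    case True
    then have "be < 1" using assms(2) by simp
    then have "(real n + 2) powr (be - 1) \<le> (real n + 2) powr 0" using True by (intro powr_mono) auto
    then have "(real n + 2) powr (be - 1) \<le> 1" by simp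
    then have "2 * be^2 * (real n + 2) powr (be - 1) \<le> 2 * be^2"
      by (intro mult_left_le) auto
    also have "\<dots> \<le> (be + 1) * (1 + (be^2 + be))"
      using be0 by (simp add: power2_eq_square algebra_simps)
    also have "\<dots> \<le> (be + 1) * exp (be^2 + be)"
      using be0 exp_ge_add_one_self[of "be^2 + be"] by (intro mult_left_mono) auto
    finally show ?thesis .
  next
    case False
    then have be1: "be \<ge> 1" using assms(1) by linarith
    have "(real n + 2) powr (be - 1) \<le> (be + 2) powr (be - 1)"
      using be1 assms(1) by (intro powr_mono2) auto
    also have "\<dots> \<le> exp (be + 1) powr (be - 1)"
      using be1 exp_ge_add_one_self[of "be + 1"] by (intro powr_mono2) auto
    also have "\<dots> = exp ((be + 1) * (be - 1))" by (simp add: powr_def)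
    finally have q1: "(real n + 2) powr (be - 1) \<le> exp (be^2 - 1)"
      by (simp add: power2_eq_square algebra_simps)
    have q2: "(1 + (be + 1)/2)^2 \<le> exp (be + 1)" using be0 by (intro exp_sq_bound) auto
    have "be * be * be \<ge> be * be" using be1 by (simp add: mult_le_cancel_left1)
    moreover have "4 * ((be + 1) * (1 + (be + 1)/2)^2) = be*be*be + 7*(be*be) + 15*be + 9"
      by (simp add: power2_eq_square algebra_simps)
    ultimately have q3: "2 * be^2 \<le> (be + 1) * (1 + (be + 1)/2)^2"
      using be1 unfolding power2_eq_square by linarith
    have q4: "2 * be^2 \<le> (be + 1) * exp (be + 1)"
      using q3 q2 be0 by (meson add_nonneg_nonneg less_imp_le mult_left_mono order_trans zero_le_one)
    have "2 * be^2 * (real n + 2) powr (be - 1) \<le> 2 * be^2 * exp (be^2 - 1)"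
      using q1 by (intro mult_left_mono) auto
    also have "\<dots> \<le> (be + 1) * exp (be + 1) * exp (be^2 - 1)"
      using q4 by (intro mult_right_mono) auto
    also have "\<dots> = (be + 1) * exp (be^2 + be)"
      by (simp add: exp_add[symmetric] mult.assoc)
    finally show ?thesis .
  qed
  have "be / (real n + 1) * ((real n + 2) / (real N + 2)) powr (be + 1) / (be + 1) * (be * real N powr be)
      = be^2 * (real n + 2) powr c * real N powr be / ((real n + 1) * (be + 1) * (real N + 2) powr c)"
  proof -
    have Y: "(real N + 2) powr c > 0" by simp
    have "be / (real n + 1) * ((real n + 2) powr c / (real N + 2) powr c) / (be + 1) * (be * real N powr be)
      = be^2 * (real n + 2) powr c * real N powr be / ((real n + 1) * (be + 1) * (real N + 2) powr c)"
      using Y be0 by (simp add: power2_eq_square field_simps)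
    then show ?thesis using p1 unfolding c_def by simp
  qed
  also have "\<dots> \<le> be^2 * (real n + 2) powr c * (real N + 2) powr be / ((real n + 1) * (be + 1) * (real N + 2) powr c)"
    using p3 be0 by (intro divide_right_mono mult_left_mono) auto
  also have "\<dots> = be^2 * (real n + 2) powr c / ((real n + 1) * (be + 1) * (real N + 2))"
  proof -
    have "(real N + 2) powr be \<noteq> 0" by simp
    then show ?thesis unfolding p2 by (rule canc)
  qed
  also have "\<dots> \<le> be^2 * (real n + 2) powr c / ((real n + 1) * (be + 1) * (real n + 3))"
    using assms(3) be0 by (intro divide_left_mono mult_left_mono mult_pos_pos) auto
  also have "\<dots> = be^2 * (real n + 2)^2 * (real n + 2) powr (be - 1) / ((real n + 1) * (be + 1) * (real n + 3))"
    unfolding p4 by simp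
  also have "\<dots> \<le> be^2 * (2 * (real n + 1) * (real n + 3)) * (real n + 2) powr (be - 1) / ((real n + 1) * (be + 1) * (real n + 3))"
    using p5 be0 by (intro divide_right_mono mult_right_mono mult_left_mono) auto
  also have "\<dots> = 2 * be^2 * (real n + 2) powr (be - 1) / (be + 1)"
    by (rule canc2) auto
  also have "\<dots> \<le> exp (be^2 + be)"
    using key be0 by (simp add: divide_simps mult.commute)
  finally have "be / (real n + 1) * ((real n + 2) / (real N + 2)) powr (be + 1) / (be + 1) * (be * real N powr be) \<le> exp (be^2 + be)" .
  then show ?thesis using be0 Nb by (simp add: divide_simps mult.commute)
qed


definition ffc :: "nat \<Rightarrow> nat \<Rightarrow> real" where
  "ffc p j = (\<Prod>i<j. real (p - i))"

lemma ffc_Suc: "ffc p (Suc j) = ffc p j * real (p - j)"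
  by (simp add: ffc_def)

lemma ffc_zero: "p < j \<Longrightarrow> ffc p j = 0"
  unfolding ffc_def by (rule prod_zero) auto

lemma ffc_fact: "j \<le> p \<Longrightarrow> ffc p j = fact p / fact (p - j)"
proof (induction j)
  case 0 then show ?case by (simp add: ffc_def)
next
  case (Suc j)
  then have jp: "j < p" by simp
  have f: "(fact (p - j) :: real) = real (p - j) * fact (p - Suc j)"
    using jp by (metis Suc_diff_Suc fact_Suc of_nat_fact of_nat_mult)
  show ?case using Suc jp by (simp add: ffc_Suc f field_simps)
qed

lemma ffc_self: "ffc j j = fact j"
  by (simp add: ffc_fact)

lemma A_ident:
  fixes al :: real and n N j :: nat
  assumes al: "0 < al" "al < 1" and jn: "j \<le> n" and nN: "n < N"
  defines "be \<equiv> real n + al"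
  shows "(-1)^j / Gamma (be + 1) * (\<Sum>p\<le>N. pochhammer (-be) p / fact p * ffc p j)
         = A_coef n N al (n - j)"
proof -
  have beI: "be \<notin> \<int>"
    unfolding be_def using notInt_plus[OF al, of "real n"] by (simp add: add.commute)
  have z: "real j - be \<notin> \<int>\<^sub>\<le>\<^sub>0"
    using notInt_minus[OF al, of "real j - real n"] by (intro notNonpos) (simp add: be_def algebra_simps)
  have Gz: "Gamma (real j - be) \<noteq> 0" using z by (simp add: Gamma_eq_zero_iff)
  have Q: "(-1)^j * pochhammer (-be) j * Gamma (be - real j + 1) = Gamma (be + 1)"
    by (rule Qlem[OF beI])
  have Gb: "Gamma (be + 1) \<noteq> 0"
    using be_def al by (intro Gamma_real_pos[THEN less_imp_neq, symmetric]) simp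
  have trm: "pochhammer (-be) p / fact p * ffc p j
      = pochhammer (-be) j * (Gamma (real p - be) / (Gamma (real j - be) * fact (p - j)))"
    if "j \<le> p" for p
  proof -
    have "pochhammer (-be) p = pochhammer (-be) j * pochhammer (-be + real j) (p - j)"
      using that by (rule pochhammer_product)
    moreover have "Gamma (real j - be + real (p - j)) = pochhammer (real j - be) (p - j) * Gamma (real j - be)"
      by (rule GR[OF z])
    moreover have "real j - be + real (p - j) = real p - be" using that by simp
    ultimately have "pochhammer (-be) p = pochhammer (-be) j * (Gamma (real p - be) / Gamma (real j - be))"
      using Gz by (simp add: add.commute)
    then show ?thesis using that by (simp add: ffc_fact)
  qed
  have "(\<Sum>p\<le>N. pochhammer (-be) p / fact p * ffc p j) = (\<Sum>p\<in>{j..N}. pochhammer (-be) p / fact p * ffc p j)"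
    by (rule sum.mono_neutral_right) (auto simp: ffc_zero)
  also have "\<dots> = (\<Sum>p\<in>{j..N}. pochhammer (-be) j * (Gamma (real p - be) / (Gamma (real j - be) * fact (p - j))))"
    by (intro sum.cong refl trm) auto
  also have "\<dots> = pochhammer (-be) j * (\<Sum>p\<in>{j..N}. Gamma (real p - be) / (Gamma (real j - be) * fact (p - j)))"
    by (simp add: sum_distrib_left)
  also have "(\<Sum>p\<in>{j..N}. Gamma (real p - be) / (Gamma (real j - be) * fact (p - j)))
      = 1 + (\<Sum>p\<in>{Suc j..N}. Gamma (real p - be) / (Gamma (real j - be) * fact (p - j)))"
    using jn nN Gz by (subst sum.atLeast_Suc_atMost) auto
  finally have S: "(\<Sum>p\<le>N. pochhammer (-be) p / fact p * ffc p j)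
      = pochhammer (-be) j * (1 + (\<Sum>p\<in>{Suc j..N}. Gamma (real p - be) / (Gamma (real j - be) * fact (p - j))))" .
  have c1: "(-1)^j / Gamma (be + 1) * pochhammer (-be) j = 1 / Gamma (be - real j + 1)"
  proof -
    have Gj: "Gamma (be - real j + 1) \<noteq> 0" using Q Gb by auto
    show ?thesis using Q Gb Gj by (simp add: field_simps)
  qed
  have idx: "n + 1 - (n - j) = Suc j" "real (n - j) + 1 + al = be - real j + 1"
    "- al - real (n - j) = real j - be" using jn by (auto simp: be_def)
  have idx2: "p + (n - j) - n = p - j" "real p - real n - al = real p - be" for p
    using jn by (auto simp: be_def)
  show ?thesis unfolding S A_coef_def idx idx2
    by (simp only: mult.assoc[symmetric] c1)
qed

lemma alg1:
  fixes s t G A X F H1 H2 E W :: real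
  assumes "G \<noteq> 0" "F \<noteq> 0" "A \<noteq> 0" "E \<noteq> 0"
  shows "- s * ((t * G / A * X) / F * (H1 * H2) * (F / E)) * W / G = (- s * t) * (X * H1 * H2 * W / (A * E))"
  using assms by (simp add: field_simps)

lemma alg2:
  fixes X H1 H2 W A E Gc k :: real
  assumes "A \<noteq> 0" "E \<noteq> 0" "Gc \<noteq> 0" "k \<noteq> 0"
  shows "X * H1 * H2 * W / (A * E) = H1 * (X * Gc / (A * Gc * (k * E)) * H2 * (k * W))"
  using assms by (simp add: field_simps)

lemma alg_q:
  fixes s P g G :: real
  assumes "s * P * g = G" "s * s = 1"
  shows "P * g = s * G"
proof -
  have "P * g = (s * s) * P * g" using assms(2) by simp
  also have "\<dots> = s * (s * P * g)" by (simp only: mult.assoc)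
  finally show ?thesis using assms(1) by simp
qed

lemma B_ident:
  fixes al h W :: real and n p :: nat
  assumes al: "0 < al" "al < 1" and np: "n + 1 \<le> p" and h: "h > 0"
  defines "be \<equiv> real n + al"
  shows "- ((-1)^n) * (pochhammer (-be) p / fact p * h powr (be - real p) * ffc p (Suc n)) * W / Gamma (be + 1)
         = h powr al * (B_coef n al p * h powr (real n - real p) * (real (p - n) * W))"
proof -
  have beI: "be \<notin> \<int>"
    unfolding be_def using notInt_plus[OF al, of "real n"] by (simp add: add.commute)
  have Q: "(-1)^(Suc n) * pochhammer (-be) (Suc n) * Gamma (be - real (Suc n) + 1) = Gamma (be + 1)"
    by (rule Qlem[OF beI])
  have e1: "be - real (Suc n) + 1 = al" by (simp add: be_def)
  have Gb: "Gamma (be + 1) > 0" using be_def al by simp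
  have Ga: "Gamma al > 0" using al by simp
  have G1a: "Gamma (1 - al) > 0" using al by simp
  have P1: "pochhammer (-be) (Suc n) = (-1)^(Suc n) * Gamma (be + 1) / Gamma al"
  proof -
    have "(-1::real)^(Suc n) * (-1)^(Suc n) = 1" by (simp add: power_mult_distrib[symmetric])
    then have "pochhammer (-be) (Suc n) * Gamma al = (-1)^(Suc n) * Gamma (be + 1)"
      using Q unfolding e1 by (intro alg_q)
    then show ?thesis using Ga by (simp add: field_simps)
  qed
  have z: "1 - al \<notin> \<int>\<^sub>\<le>\<^sub>0" using al by (intro notNonpos notInt_minus) auto
  have P2: "pochhammer (-be) p = pochhammer (-be) (Suc n) * pochhammer (1 - al) (p - Suc n)"
  proof -
    have "pochhammer (-be) p = pochhammer (-be) (Suc n) * pochhammer (-be + real (Suc n)) (p - Suc n)"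
      using np by (intro pochhammer_product) auto
    moreover have "-be + real (Suc n) = 1 - al" by (simp add: be_def)
    ultimately show ?thesis by metis
  qed
  have P3: "Gamma (real p - real n - al) = pochhammer (1 - al) (p - Suc n) * Gamma (1 - al)"
  proof -
    have "Gamma (1 - al + real (p - Suc n)) = pochhammer (1 - al) (p - Suc n) * Gamma (1 - al)"
      by (rule GR[OF z])
    moreover have "1 - al + real (p - Suc n) = real p - real n - al" using np by auto
    ultimately show ?thesis by simp
  qed
  have F1: "ffc p (Suc n) = fact p / fact (p - Suc n)" using np by (intro ffc_fact) auto
  have F2: "(fact (p - n) :: real) = real (p - n) * fact (p - Suc n)"
  proof -
    have "p - n = Suc (p - Suc n)" using np by simp
    then have "(fact (p - n) :: real) = fact (Suc (p - Suc n))" by simp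
    also have "\<dots> = real (Suc (p - Suc n)) * fact (p - Suc n)" by (rule fact_Suc)
    finally show ?thesis using \<open>p - n = Suc (p - Suc n)\<close> by simp
  qed
  have H: "h powr (be - real p) = h powr al * h powr (real n - real p)"
    by (simp add: be_def powr_add[symmetric] algebra_simps)
  have sg: "- ((-1::real)^n) * (-1)^(Suc n) = 1" by (simp add: power_mult_distrib[symmetric])
  have pn: "real (p - n) > 0" using np by simp
  have fp: "(fact p :: real) > 0" "(fact (p - Suc n) :: real) > 0" by simp_all
  define X where "X = pochhammer (1 - al) (p - Suc n)"
  have "- ((-1)^n) * (pochhammer (-be) p / fact p * h powr (be - real p) * ffc p (Suc n)) * W / Gamma (be + 1)
      = (- ((-1::real)^n) * (-1)^(Suc n)) * (X * h powr al * h powr (real n - real p) * W / (Gamma al * fact (p - Suc n)))"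
    unfolding P2 P1 F1 H X_def[symmetric] using Gb Ga fp by (intro alg1) auto
  also have "\<dots> = X * h powr al * h powr (real n - real p) * W / (Gamma al * fact (p - Suc n))"
    unfolding sg by simp
  also have "\<dots> = h powr al * (B_coef n al p * h powr (real n - real p) * (real (p - n) * W))"
    unfolding B_coef_def P3 F2 X_def[symmetric] using Ga G1a pn fp by (intro alg2) auto
  finally show ?thesis .
qed


lemma sign1: "j \<le> n \<Longrightarrow> (-1::real)^n * (-1)^j * (- ((-1)^(Suc n - j))) = 1"
proof -
  assume "j \<le> n"
  then have "n + j + (Suc n - j) = 2 * n + 1" by simp
  have "(-1::real)^n * (-1)^j * (-1)^(Suc n - j) = (-1)^(n + j + (Suc n - j))" by (simp add: power_add)
  also have "\<dots> = (-1)^(2 * n + 1)" using \<open>n + j + (Suc n - j) = 2 * n + 1\<close> by simp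
  also have "\<dots> = -1" by simp
  finally have "(-1::real)^n * (-1)^j * (-1)^(Suc n - j) = -1" .
  then show ?thesis by simp
qed

lemma powr_deriv_left:
  fixes t e \<tau> :: real
  assumes "\<tau> < t"
  shows "((\<lambda>\<tau>. (t - \<tau>) powr e) has_real_derivative (- (e * (t - \<tau>) powr (e - 1)))) (at \<tau>)"
  using assms by (auto intro!: derivative_eq_intros)

lemma alg_s:
  fixes s1 s2 s3 P d d0 :: real
  assumes "s1 * s2 * (- s3) = 1"
  shows "s1 * (s2 * (0 * d0 - s3 * P * d)) = P * d"
proof -
  have "s1 * (s2 * (0 * d0 - s3 * P * d)) = (s1 * s2 * (- s3)) * (P * d)" by (simp add: algebra_simps)
  then show ?thesis using assms by (simp only: mult_1)
qed

lemma alg_v: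
  fixes s A S' s2 G I :: real
  assumes "s * A = S'" "s * s2 = -1"
  shows "s * (A - s2 / G * I) = S' + I / G"
proof -
  have "s * (A - s2 / G * I) = s * A - (s * s2) / G * I" by (simp add: algebra_simps)
  then show ?thesis using assms by simp
qed

lemma alg_d:
  fixes e g u X :: real
  assumes "e \<noteq> 0" "g \<noteq> 0"
  shows "(- u) * (- (e * X)) / (e * g) = u * X / g"
  using assms by (simp add: field_simps)

lemma step1:
  fixes a t al :: real and n :: nat and D :: "nat \<Rightarrow> real \<Rightarrow> real"
  assumes at: "a < t" and al: "0 < al" "al < 1"
    and Dc: "\<And>j. j \<le> Suc n \<Longrightarrow> continuous_on {a..t} (D j)"
    and Dd: "\<And>j \<tau>. j \<le> n \<Longrightarrow> \<tau> \<in> {a<..<t} \<Longrightarrow> (D j has_real_derivative D (Suc j) \<tau>) (at \<tau>)"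
  defines "be \<equiv> real n + al"
  shows "((\<lambda>\<tau>. (t - \<tau>) powr (al - 1) / Gamma al * D 0 \<tau>) has_integral
     ((\<Sum>j\<le>n. (t - a) powr (be - real j) / Gamma (be - real j + 1) * D (n - j) a)
      + integral {a..t} (\<lambda>\<tau>. (t - \<tau>) powr be * D (Suc n) \<tau>) / Gamma (be + 1))) {a..t}"
proof -
  define f where "f = (\<lambda>j \<tau>. (-1)^(Suc n - j) * (t - \<tau>) powr (be - real j) / Gamma (be - real j + 1))"
  have fc: "continuous_on {a..t} (f j)" if "j \<le> n" for j
  proof -
    have "be - real j > 0" using that al by (simp add: be_def)
    then have "continuous_on {a..t} (\<lambda>\<tau>. (t - \<tau>) powr (be - real j))"
      by (intro continuous_on_powr' continuous_intros) auto
    then have "continuous_on {a..t} (\<lambda>\<tau>. ((-1)^(Suc n - j) / Gamma (be - real j + 1)) * (t - \<tau>) powr (be - real j))"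
      by (rule continuous_on_mult_left)
    moreover have "f j = (\<lambda>\<tau>. ((-1)^(Suc n - j) / Gamma (be - real j + 1)) * (t - \<tau>) powr (be - real j))"
      unfolding f_def by auto
    ultimately show ?thesis by simp
  qed
  have fd: "(f j has_real_derivative f (Suc j) \<tau>) (at \<tau>)" if j: "j \<le> n" and \<tau>: "\<tau> \<in> {a<..<t}" for j \<tau>
  proof -
    define e where "e = be - real j"
    have e0: "e > 0" using j al by (simp add: be_def e_def)
    have G: "Gamma (e + 1) = e * Gamma e"
      using e0 by (intro Gamma_plus1) (auto elim: nonpos_Ints_cases)
    have Ge: "Gamma e > 0" using e0 by simp
    have d: "(f j has_real_derivative ((-1)^(Suc n - j) * (- (e * (t - \<tau>) powr (e - 1))) / Gamma (e + 1))) (at \<tau>)"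
      unfolding f_def e_def[symmetric]
      using \<tau> by (intro DERIV_cdivide DERIV_cmult powr_deriv_left) auto
    have s: "(-1::real)^(Suc n - j) = - ((-1)^(Suc n - Suc j))"
    proof -
      have "Suc n - j = Suc (Suc n - Suc j)" using j by simp
      then show ?thesis by simp
    qed
    have "(-1)^(Suc n - j) * (- (e * (t - \<tau>) powr (e - 1))) / Gamma (e + 1)
          = (-1)^(Suc n - Suc j) * (t - \<tau>) powr (e - 1) / Gamma e"
    proof -
      have ene: "e \<noteq> 0" using e0 by linarith
      have gne: "Gamma e \<noteq> 0" using Ge by linarith
      show ?thesis unfolding G s by (rule alg_d[OF ene gne])
    qed
    moreover have "f (Suc j) \<tau> = (-1)^(Suc n - Suc j) * (t - \<tau>) powr (e - 1) / Gamma e"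
      unfolding f_def e_def by (simp add: algebra_simps)
    ultimately show ?thesis using d by simp
  qed
  have main: "((\<lambda>\<tau>. f (Suc n) \<tau> * D 0 \<tau>) has_integral
     (-1)^n * ((\<Sum>j\<le>n. (-1)^j * (f j t * D (n-j) t - f j a * D (n-j) a))
               - integral {a..t} (\<lambda>\<tau>. f 0 \<tau> * D (Suc n) \<tau>))) {a..t}"
    using at by (intro gen_ibp fc fd Dc Dd) auto
  have f1: "f (Suc n) \<tau> = (t - \<tau>) powr (al - 1) / Gamma al" for \<tau>
    unfolding f_def by (simp add: be_def)
  have ft: "f j t = 0" if "j \<le> n" for j
    unfolding f_def by simp
  have fa: "f j a = (-1)^(Suc n - j) * ((t - a) powr (be - real j) / Gamma (be - real j + 1))" for j
    unfolding f_def by simp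
  have f0: "integral {a..t} (\<lambda>\<tau>. f 0 \<tau> * D (Suc n) \<tau>)
      = (-1)^(Suc n) / Gamma (be + 1) * integral {a..t} (\<lambda>\<tau>. (t - \<tau>) powr be * D (Suc n) \<tau>)"
  proof -
    have "(\<lambda>\<tau>. f 0 \<tau> * D (Suc n) \<tau>) = (\<lambda>\<tau>. (-1)^(Suc n) / Gamma (be + 1) * ((t - \<tau>) powr be * D (Suc n) \<tau>))"
      unfolding f_def by (simp add: field_simps)
    then show ?thesis by simp
  qed
  have sum_eq: "(-1)^n * (\<Sum>j\<le>n. (-1)^j * (f j t * D (n-j) t - f j a * D (n-j) a))
      = (\<Sum>j\<le>n. (t - a) powr (be - real j) / Gamma (be - real j + 1) * D (n - j) a)"
    unfolding sum_distrib_left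
  proof (intro sum.cong refl)
    fix j assume "j \<in> {..n}"
    then have j: "j \<le> n" by simp
    show "(-1)^n * ((-1)^j * (f j t * D (n-j) t - f j a * D (n-j) a))
        = (t - a) powr (be - real j) / Gamma (be - real j + 1) * D (n - j) a"
      unfolding ft[OF j] fa by (rule alg_s[OF sign1[OF j]])
  qed
  have sg: "(-1::real)^n * (-1)^(Suc n) = -1" by (simp add: power_mult_distrib[symmetric])
  have val: "(-1)^n * ((\<Sum>j\<le>n. (-1)^j * (f j t * D (n-j) t - f j a * D (n-j) a))
               - integral {a..t} (\<lambda>\<tau>. f 0 \<tau> * D (Suc n) \<tau>))
      = (\<Sum>j\<le>n. (t - a) powr (be - real j) / Gamma (be - real j + 1) * D (n - j) a)
        + integral {a..t} (\<lambda>\<tau>. (t - \<tau>) powr be * D (Suc n) \<tau>) / Gamma (be + 1)"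
    unfolding f0 by (rule alg_v[OF sum_eq sg])
  show ?thesis using main unfolding f1 val .
qed
lemma poly_deriv:
  fixes cf :: "nat \<Rightarrow> real" and a :: real
  shows "((\<lambda>\<tau>. \<Sum>p\<le>N. cf p * ffc p j * (\<tau> - a)^(p - j)) has_real_derivative
          (\<Sum>p\<le>N. cf p * ffc p (Suc j) * (\<tau> - a)^(p - Suc j))) (at \<tau>)"
proof -
  have "((\<lambda>\<tau>. \<Sum>p\<le>N. cf p * ffc p j * (\<tau> - a)^(p - j)) has_real_derivative
          (\<Sum>p\<le>N. cf p * ffc p j * (real (p - j) * (\<tau> - a)^(p - j - 1)))) (at \<tau>)"
    by (intro DERIV_sum DERIV_cmult) (auto intro!: derivative_eq_intros)
  moreover have "(\<Sum>p\<le>N. cf p * ffc p j * (real (p - j) * (\<tau> - a)^(p - j - 1))) = (\<Sum>p\<le>N. cf p * ffc p (Suc j) * (\<tau> - a)^(p - Suc j))"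
    unfolding ffc_Suc by (intro sum.cong refl) (simp add: ac_simps)
  ultimately show ?thesis by simp
qed

lemma alg_inv:
  fixes X s S I :: real
  assumes "X = s * (S - I)" "s * s = 1"
  shows "I = S - s * X"
proof -
  have "s * X = (s * s) * (S - I)" using assms(1) by simp
  then show ?thesis using assms(2) by simp
qed

lemma step2:
  fixes a t :: real and n N :: nat and D :: "nat \<Rightarrow> real \<Rightarrow> real" and cf :: "nat \<Rightarrow> real"
  assumes at: "a < t"
    and Dc: "\<And>j. j \<le> Suc n \<Longrightarrow> continuous_on {a..t} (D j)"
    and Dd: "\<And>j \<tau>. j \<le> n \<Longrightarrow> \<tau> \<in> {a<..<t} \<Longrightarrow> (D j has_real_derivative D (Suc j) \<tau>) (at \<tau>)"
  defines "pk \<equiv> (\<lambda>j \<tau>. \<Sum>p\<le>N. cf p * ffc p j * (\<tau> - a)^(p - j))"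
  shows "integral {a..t} (\<lambda>\<tau>. pk 0 \<tau> * D (Suc n) \<tau>)
     = (\<Sum>j\<le>n. (-1)^j * (pk j t * D (n-j) t - pk j a * D (n-j) a))
       - (-1)^n * integral {a..t} (\<lambda>\<tau>. pk (Suc n) \<tau> * D 0 \<tau>)"
proof -
  have fc: "continuous_on {a..t} (pk j)" for j
    unfolding pk_def by (intro continuous_intros)
  have fd: "(pk j has_real_derivative pk (Suc j) \<tau>) (at \<tau>)" for j \<tau>
    unfolding pk_def by (rule poly_deriv)
  have main: "((\<lambda>\<tau>. pk (Suc n) \<tau> * D 0 \<tau>) has_integral
     (-1)^n * ((\<Sum>j\<le>n. (-1)^j * (pk j t * D (n-j) t - pk j a * D (n-j) a))
               - integral {a..t} (\<lambda>\<tau>. pk 0 \<tau> * D (Suc n) \<tau>))) {a..t}"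
    using at by (intro gen_ibp fc fd Dc Dd) auto
  then have "integral {a..t} (\<lambda>\<tau>. pk (Suc n) \<tau> * D 0 \<tau>) = (-1)^n * ((\<Sum>j\<le>n. (-1)^j * (pk j t * D (n-j) t - pk j a * D (n-j) a))
               - integral {a..t} (\<lambda>\<tau>. pk 0 \<tau> * D (Suc n) \<tau>))"
    by (rule integral_unique)
  moreover have "(-1::real)^n * (-1)^n = 1" by (simp add: power_mult_distrib[symmetric])
  ultimately show ?thesis by (rule alg_inv)
qed

lemma pk_a:
  fixes cf :: "nat \<Rightarrow> real"
  assumes "j \<le> N"
  shows "(\<Sum>p\<le>N. cf p * ffc p j * (a - a)^(p - j)) = cf j * fact j"
proof -
  have "(\<Sum>p\<le>N. cf p * ffc p j * (a - a)^(p - j)) = (\<Sum>p\<le>N. if p = j then cf j * fact j else 0)"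
  proof (intro sum.cong refl)
    fix p assume "p \<in> {..N}"
    show "cf p * ffc p j * (a - a)^(p - j) = (if p = j then cf j * fact j else 0)"
      by (cases "p < j") (auto simp: ffc_zero ffc_self)
  qed
  then show ?thesis using assms by simp
qed

lemma pk_t:
  fixes be h :: real and c :: "nat \<Rightarrow> real"
  assumes h: "h > 0"
  shows "(\<Sum>p\<le>N. (c p * h powr (be - real p)) * ffc p j * h^(p - j)) = h powr (be - real j) * (\<Sum>p\<le>N. c p * ffc p j)"
  unfolding sum_distrib_left
proof (intro sum.cong refl)
  fix p assume "p \<in> {..N}"
  show "c p * h powr (be - real p) * ffc p j * h^(p - j) = h powr (be - real j) * (c p * ffc p j)"
  proof (cases "p < j")
    case True then show ?thesis by (simp add: ffc_zero)
  next
    case False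
    then have "h^(p - j) = h powr (real p - real j)" using h by (simp add: powr_realpow[symmetric] of_nat_diff)
    then have "h powr (be - real p) * h^(p - j) = h powr (be - real j)" by (simp add: powr_add[symmetric])
    then have "c p * ffc p j * (h powr (be - real p) * h^(p - j)) = c p * ffc p j * h powr (be - real j)" by simp
    then show ?thesis by (simp only: ac_simps)
  qed
qed

lemma pk_int:
  fixes cf :: "nat \<Rightarrow> real" and x :: "real \<Rightarrow> real"
  assumes xc: "continuous_on {a..t} x"
  shows "integral {a..t} (\<lambda>\<tau>. (\<Sum>p\<le>N. cf p * ffc p (Suc n) * (\<tau> - a)^(p - Suc n)) * x \<tau>)
       = (\<Sum>p\<in>{Suc n..N}. cf p * ffc p (Suc n) * integral {a..t} (\<lambda>\<tau>. (\<tau> - a)^(p - Suc n) * x \<tau>))"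
proof -
  have int: "(\<lambda>\<tau>. cf p * ffc p (Suc n) * ((\<tau> - a)^(p - Suc n) * x \<tau>)) integrable_on {a..t}" for p
    by (intro integrable_continuous_interval continuous_intros xc)
  have "integral {a..t} (\<lambda>\<tau>. (\<Sum>p\<le>N. cf p * ffc p (Suc n) * (\<tau> - a)^(p - Suc n)) * x \<tau>)
      = integral {a..t} (\<lambda>\<tau>. \<Sum>p\<le>N. cf p * ffc p (Suc n) * ((\<tau> - a)^(p - Suc n) * x \<tau>))"
    by (simp add: sum_distrib_right mult.assoc)
  also have "\<dots> = (\<Sum>p\<le>N. integral {a..t} (\<lambda>\<tau>. cf p * ffc p (Suc n) * ((\<tau> - a)^(p - Suc n) * x \<tau>)))"
    using int by (intro integral_sum) auto
  also have "\<dots> = (\<Sum>p\<le>N. cf p * ffc p (Suc n) * integral {a..t} (\<lambda>\<tau>. (\<tau> - a)^(p - Suc n) * x \<tau>))"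
    by simp
  also have "\<dots> = (\<Sum>p\<in>{Suc n..N}. cf p * ffc p (Suc n) * integral {a..t} (\<lambda>\<tau>. (\<tau> - a)^(p - Suc n) * x \<tau>))"
    by (rule sum.mono_neutral_right) (auto simp: ffc_zero)
  finally show ?thesis .
qed


lemma LB_cont:
  fixes g :: "real \<Rightarrow> real"
  assumes "continuous_on {a..t} g"
  shows "(LBINT \<tau>:{a..t}. g \<tau>) = integral {a..t} g"
  using set_borel_integral_eq_integral(2)[OF borel_integrable_atLeastAtMost'[OF assms]] .

lemma kernel_int:
  fixes a t al :: real
  assumes "a < t" "0 < al"
  shows "((\<lambda>\<tau>. (t - \<tau>) powr (al - 1)) has_integral (t - a) powr al / al) {a..t}"
proof -
  have "((\<lambda>\<tau>. (t - \<tau>) powr (al - 1)) has_integral ((\<lambda>\<tau>. - ((t - \<tau>) powr al / al)) t - (\<lambda>\<tau>. - ((t - \<tau>) powr al / al)) a)) {a..t}"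
  proof (rule fundamental_theorem_of_calculus_interior)
    show "a \<le> t" using assms by simp
    show "continuous_on {a..t} (\<lambda>\<tau>. - ((t - \<tau>) powr al / al))"
      using assms by (intro continuous_intros continuous_on_powr') auto
    fix \<tau> assume "\<tau> \<in> {a<..<t}"
    then have "((\<lambda>\<tau>. - ((t - \<tau>) powr al / al)) has_real_derivative (t - \<tau>) powr (al - 1)) (at \<tau>)"
      using assms by (auto intro!: derivative_eq_intros)
    then show "((\<lambda>\<tau>. - ((t - \<tau>) powr al / al)) has_vector_derivative (t - \<tau>) powr (al - 1)) (at \<tau>)"
      by (simp add: has_real_derivative_iff_has_vector_derivative)
  qed
  then show ?thesis by simp
qed

lemma RL_conv:
  fixes a t al :: real and x :: "real \<Rightarrow> real"
  assumes at: "a < t" and al: "0 < al" and xc: "continuous_on {a..t} x"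
  shows "(LBINT \<tau>:{a..t}. (t - \<tau>) powr (al - 1) * x \<tau>) = integral {a..t} (\<lambda>\<tau>. (t - \<tau>) powr (al - 1) * x \<tau>)"
proof -
  define g where "g = (\<lambda>\<tau>. (t - \<tau>) powr (al - 1) * x \<tau>)"
  have k: "(\<lambda>\<tau>. (t - \<tau>) powr (al - 1)) absolutely_integrable_on {a..t}"
    using kernel_int[OF at al] by (intro nonnegative_absolutely_integrable) (auto simp: integrable_on_def)
  have xm: "x \<in> borel_measurable (lebesgue_on {a..t})"
    by (rule continuous_imp_measurable_on_sets_lebesgue[OF xc]) auto
  have xb: "bounded (x ` {a..t})"
    by (intro compact_imp_bounded compact_continuous_image xc) auto
  have "(\<lambda>\<tau>. x \<tau> * (t - \<tau>) powr (al - 1)) absolutely_integrable_on {a..t}"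
    by (rule absolutely_integrable_bounded_measurable_product_real[OF xm _ xb k]) auto
  then have gi: "set_integrable lebesgue {a..t} g"
    unfolding g_def by (simp add: mult.commute)
  have split: "(\<lambda>\<tau>. indicator {a..t} \<tau> *\<^sub>R g \<tau>) = (\<lambda>\<tau>. indicator {a..<t} \<tau> *\<^sub>R g \<tau> + indicator {t} \<tau> *\<^sub>R g t)"
    using at by (auto simp: indicator_def fun_eq_iff)
  have gc: "continuous_on {a..<t} g"
    unfolding g_def by (intro continuous_intros continuous_on_subset[OF xc]) auto
  have meas: "(\<lambda>\<tau>. indicator {a..t} \<tau> *\<^sub>R g \<tau>) \<in> borel_measurable lborel"
  proof -
    have m1: "(\<lambda>\<tau>. indicator {a..<t} \<tau> *\<^sub>R g \<tau>) \<in> borel_measurable borel"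
      by (rule borel_measurable_continuous_on_indicator[OF _ gc]) auto
    have m2: "(\<lambda>\<tau>. indicator {t} \<tau> *\<^sub>R g t) \<in> borel_measurable borel"
      by (intro borel_measurable_scaleR borel_measurable_indicator borel_measurable_const) auto
    show ?thesis unfolding split using borel_measurable_add[OF m1 m2] by simp
  qed
  have "(LBINT \<tau>:{a..t}. g \<tau>) = (LINT \<tau>:{a..t}|lebesgue. g \<tau>)"
    unfolding set_lebesgue_integral_def using meas by (simp add: integral_completion)
  also have "\<dots> = integral {a..t} g"
    by (rule set_lebesgue_integral_eq_integral(2)[OF gi])
  finally show ?thesis unfolding g_def .
qed


lemma sum_zero_pow:
  fixes F :: "nat \<Rightarrow> real"
  shows "(\<Sum>p\<le>N. F p * 0^p) = F 0"
proof -
  have "(\<Sum>p\<le>N. F p * 0^p) = (\<Sum>p\<le>N. if p = 0 then F 0 else 0)"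
    by (intro sum.cong refl) auto
  then show ?thesis by simp
qed

lemma taylor_sign:
  fixes a t be \<tau> :: real and N :: nat
  assumes at: "a < t" and be: "be > 0" and \<tau>: "\<tau> \<in> {a..<t}"
  shows "pochhammer (-be) (Suc N) * ((t - \<tau>) powr be
          - (\<Sum>p\<le>N. pochhammer (-be) p / fact p * (t - a) powr (be - real p) * (\<tau> - a)^p)) \<ge> 0"
proof (cases "\<tau> = a")
  case True
  have "(\<Sum>p\<le>N. pochhammer (-be) p / fact p * (t - a) powr (be - real p) * (\<tau> - a)^p) = (t - a) powr be"
    using True sum_zero_pow[of "\<lambda>p. pochhammer (-be) p / fact p * (t - a) powr (be - real p)" N] by simp
  then show ?thesis using True by simp
next
  case False
  with \<tau> have \<tau>': "a < \<tau>" "\<tau> < t" by auto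
  define diff where "diff = (\<lambda>m s. pochhammer (-be) m * (t - s) powr (be - real m))"
  have d0: "diff 0 = (\<lambda>s. (t - s) powr be)" unfolding diff_def by simp
  have dd: "\<forall>m s. m < Suc N \<and> a \<le> s \<and> s \<le> \<tau> \<longrightarrow> DERIV (diff m) s :> diff (Suc m) s"
  proof (intro allI impI)
    fix m s assume "m < Suc N \<and> a \<le> s \<and> s \<le> \<tau>"
    then have s: "s < t" using \<tau>' by auto
    have "DERIV (diff m) s :> pochhammer (-be) m * (- ((be - real m) * (t - s) powr (be - real m - 1)))"
      unfolding diff_def using s by (auto intro!: derivative_eq_intros)
    moreover have "pochhammer (-be) m * (- ((be - real m) * (t - s) powr (be - real m - 1))) = diff (Suc m) s"
      unfolding diff_def by (simp add: pochhammer_rec' algebra_simps)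
    ultimately show "DERIV (diff m) s :> diff (Suc m) s" by simp
  qed
  obtain \<xi> where \<xi>: "a < \<xi>" "\<xi> < \<tau>"
    and T: "(\<lambda>s. (t - s) powr be) \<tau> = (\<Sum>m<Suc N. (diff m a / fact m) * (\<tau> - a)^m) + (diff (Suc N) \<xi> / fact (Suc N)) * (\<tau> - a)^(Suc N)"
    using Taylor_up[of "Suc N" diff "\<lambda>s. (t - s) powr be" a \<tau> a, OF _ d0 dd] \<tau>' by auto
  have S: "(\<Sum>m<Suc N. (diff m a / fact m) * (\<tau> - a)^m) = (\<Sum>p\<le>N. pochhammer (-be) p / fact p * (t - a) powr (be - real p) * (\<tau> - a)^p)"
    unfolding lessThan_Suc_atMost diff_def by (intro sum.cong refl) (simp add: field_simps)
  define K where "K = pochhammer (-be) (Suc N)"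
  have R: "(t - \<tau>) powr be - (\<Sum>p\<le>N. pochhammer (-be) p / fact p * (t - a) powr (be - real p) * (\<tau> - a)^p)
      = K * ((t - \<xi>) powr (be - real (Suc N)) / fact (Suc N) * (\<tau> - a)^(Suc N))"
  proof -
    have T2: "(t - \<tau>) powr be = (\<Sum>p\<le>N. pochhammer (-be) p / fact p * (t - a) powr (be - real p) * (\<tau> - a)^p)
       + (diff (Suc N) \<xi> / fact (Suc N)) * (\<tau> - a)^(Suc N)"
      using T[unfolded S] by simp
    have E: "(diff (Suc N) \<xi> / fact (Suc N)) * (\<tau> - a)^(Suc N) = K * ((t - \<xi>) powr (be - real (Suc N)) / fact (Suc N) * (\<tau> - a)^(Suc N))"
      unfolding diff_def K_def by (simp only: times_divide_eq_left times_divide_eq_right mult.assoc)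
    show ?thesis using T2 E by linarith
  qed
  have nn: "(t - \<xi>) powr (be - real (Suc N)) / fact (Suc N) * (\<tau> - a)^(Suc N) \<ge> 0"
    using \<tau>' by simp
  have "K * (K * ((t - \<xi>) powr (be - real (Suc N)) / fact (Suc N) * (\<tau> - a)^(Suc N))) \<ge> 0"
  proof -
    have "K * K \<ge> 0" by simp
    from mult_nonneg_nonneg[OF this nn] show ?thesis by (simp only: mult.assoc)
  qed
  then show ?thesis unfolding R K_def[symmetric] .
qed

lemma poly_int:
  fixes a t :: real
  assumes "a \<le> t"
  shows "((\<lambda>\<tau>. (\<tau> - a)^p) has_integral (t - a)^(Suc p) / real (Suc p)) {a..t}"
proof -
  have "((\<lambda>\<tau>. (\<tau> - a)^p) has_integral ((\<lambda>\<tau>. (\<tau> - a)^(Suc p) / real (Suc p)) t - (\<lambda>\<tau>. (\<tau> - a)^(Suc p) / real (Suc p)) a)) {a..t}"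
  proof (rule fundamental_theorem_of_calculus_interior[OF assms])
    show "continuous_on {a..t} (\<lambda>\<tau>. (\<tau> - a)^(Suc p) / real (Suc p))"
      by (intro continuous_intros) auto
    fix \<tau> :: real
    have "((\<lambda>\<tau>. (\<tau> - a)^(Suc p) / real (Suc p)) has_real_derivative (\<tau> - a)^p) (at \<tau>)"
      by (auto intro!: derivative_eq_intros simp del: power_Suc)
    then show "((\<lambda>\<tau>. (\<tau> - a)^(Suc p) / real (Suc p)) has_vector_derivative (\<tau> - a)^p) (at \<tau>)"
      by (simp add: has_real_derivative_iff_has_vector_derivative)
  qed
  then show ?thesis by simp
qed

lemma Rint:
  fixes a t be :: real and N :: nat
  assumes at: "a < t" and be: "be > 0"
  shows "((\<lambda>\<tau>. (t - \<tau>) powr be - (\<Sum>p\<le>N. pochhammer (-be) p / fact p * (t - a) powr (be - real p) * (\<tau> - a)^p))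
     has_integral (t - a) powr (be + 1) * pochhammer (-be) (Suc N) / (fact (Suc N) * (be + 1))) {a..t}"
proof -
  define h where "h = t - a"
  have h0: "h > 0" using at by (simp add: h_def)
  have k: "((\<lambda>\<tau>. (t - \<tau>) powr be) has_integral h powr (be + 1) / (be + 1)) {a..t}"
    using kernel_int[OF at, of "be + 1"] be by (simp add: h_def)
  have s: "((\<lambda>\<tau>. \<Sum>p\<le>N. pochhammer (-be) p / fact p * (t - a) powr (be - real p) * (\<tau> - a)^p) has_integral
       (\<Sum>p\<le>N. pochhammer (-be) p / fact p * h powr (be - real p) * (h^(Suc p) / real (Suc p)))) {a..t}"
    unfolding h_def using at by (intro has_integral_sum has_integral_mult_right poly_int) auto
  have eq: "h powr (be - real p) * (h^(Suc p) / real (Suc p)) = h powr (be + 1) / (real p + 1)" for p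
  proof -
    have "h^(Suc p) = h powr (real (Suc p))" using h0 by (simp only: powr_realpow)
    then have "h^(Suc p) = h powr (real p + 1)" by (simp add: add.commute)
    then have "h powr (be - real p) * h^(Suc p) = h powr (be + 1)" by (simp add: powr_add[symmetric])
    then show ?thesis by (simp add: add.commute)
  qed
  have "(\<Sum>p\<le>N. pochhammer (-be) p / fact p * h powr (be - real p) * (h^(Suc p) / real (Suc p)))
      = h powr (be + 1) * (\<Sum>p\<le>N. pochhammer (-be) p / fact p / (real p + 1))"
    unfolding sum_distrib_left by (intro sum.cong refl) (simp only: mult.assoc eq, simp add: field_simps)
  moreover have "h powr (be + 1) / (be + 1) - h powr (be + 1) * (\<Sum>p\<le>N. pochhammer (-be) p / fact p / (real p + 1))
      = h powr (be + 1) * (1 / (be + 1) - (\<Sum>p\<le>N. pochhammer (-be) p / fact p / (real p + 1)))"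
    by (simp add: algebra_simps)
  moreover have "1 / (be + 1) - (\<Sum>p\<le>N. pochhammer (-be) p / fact p / (real p + 1)) = pochhammer (-be) (Suc N) / (fact (Suc N) * (be + 1))"
    using be by (intro SN) auto
  ultimately show ?thesis using has_integral_diff[OF k s] unfolding h_def by simp
qed


lemma alg_ii:
  fixes s P g G H D :: real
  assumes "s * P * g = G" "G \<noteq> 0"
  shows "s * (P * H * D) / G = H / g * D"
proof -
  have g: "g \<noteq> 0" using assms by auto
  have "s * (P * H * D) / G = (s * P * g) * H * D / (G * g)" using g by (simp add: field_simps)
  then show ?thesis using assms g by simp
qed

lemma alg_I2:
  fixes A B s X G :: real
  shows "(A - B - s * X) / G = A / G - B / G + (- s * X / G)"
  by (simp add: diff_divide_distrib)

lemma canc3: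
  fixes A H F :: real
  assumes "A \<noteq> 0"
  shows "H * (A * A) / (F * A) = H * A / F"
  using assms by (simp add: field_simps)

lemma alg_K:
  fixes K H F :: real
  assumes "K \<noteq> 0"
  shows "K / \<bar>K\<bar> * (H * K / F) = H * \<bar>K\<bar> / F"
proof -
  have kk: "K * K = \<bar>K\<bar> * \<bar>K\<bar>" by (simp add: abs_mult_self_eq)
  have nz: "\<bar>K\<bar> \<noteq> 0" using assms by simp
  have "K / \<bar>K\<bar> * (H * K / F) = (K * (H * K)) / (\<bar>K\<bar> * F)" by (rule times_divide_times_eq)
  also have "\<dots> = H * (K * K) / (F * \<bar>K\<bar>)" by (simp only: mult_ac)
  also have "\<dots> = H * (\<bar>K\<bar> * \<bar>K\<bar>) / (F * \<bar>K\<bar>)" by (simp only: kk)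
  also have "\<dots> = H * \<bar>K\<bar> / F" by (rule canc3[OF nz])
  finally show ?thesis .
qed

theorem theorem3:
  fixes a b :: real and \<alpha> \<alpha>' :: "real \<Rightarrow> real" and n N :: nat
    and x :: "real \<Rightarrow> real" and Dx :: "nat \<Rightarrow> real \<Rightarrow> real"
  assumes ab: "a < b"
    and alpha_range: "\<And>t. t \<in> {a..b} \<Longrightarrow> 0 < \<alpha> t \<and> \<alpha> t < 1"
    and alpha_deriv: "\<And>t. t \<in> {a..b} \<Longrightarrow> (\<alpha> has_real_derivative \<alpha>' t) (at t within {a..b})"
    and alpha'_cont: "continuous_on {a..b} \<alpha>'"
    and N_ge: "N \<ge> n + 1"
    and Dx0: "Dx 0 = x"
    and Dx_deriv: "\<And>k t. k \<le> n \<Longrightarrow> t \<in> {a..b} \<Longrightarrow>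
                     (Dx k has_real_derivative Dx (Suc k) t) (at t within {a..b})"
    and Dx_cont: "continuous_on {a..b} (Dx (n + 1))"
    and t_in: "t \<in> {a<..b}"
  shows "\<bar>RL_left_integral a \<alpha> x t
           - (t - a) powr \<alpha> t *
             ((\<Sum>k = 0..n. A_coef n N (\<alpha> t) k * (t - a) ^ k * Dx k t)
              + (\<Sum>k = n + 1..N. B_coef n (\<alpha> t) k * (t - a) powr (real n - real k) * V_fun a x n k t))\<bar>
         \<le> Sup ((\<lambda>\<tau>. \<bar>Dx (n + 1) \<tau>\<bar>) ` {a..t})
           * exp ((real n + \<alpha> t)\<^sup>2 + real n + \<alpha> t)
           / (Gamma (real n + 1 + \<alpha> t) * (real n + \<alpha> t) * real N powr (real n + \<alpha> t))
           * (t - a) powr (real n + 1 + \<alpha> t)"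
proof -
  have at: "a < t" and tb: "t \<le> b" using t_in by auto
  define al where "al = \<alpha> t"
  have al: "0 < al" "al < 1" using alpha_range[of t] at tb by (auto simp: al_def)
  define be where "be = real n + al"
  define h where "h = t - a"
  have h0: "h > 0" using at by (simp add: h_def)
  have be0: "be > 0" using al by (simp add: be_def)
  have beI: "be \<notin> \<int>" unfolding be_def using notInt_plus[OF al, of "real n"] by (simp add: add.commute)
  have nN: "n < N" using N_ge by simp
  have Dcab: "continuous_on {a..b} (Dx j)" if "j \<le> Suc n" for j
  proof (cases "j \<le> n")
    case True
    then show ?thesis by (intro DERIV_continuous_on[of _ _ "\<lambda>s. Dx (Suc j) s"] Dx_deriv) auto
  next
    case False
    then have "j = Suc n" using that by simp
    then show ?thesis using Dx_cont by simp
  qed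
  have Dc: "continuous_on {a..t} (Dx j)" if "j \<le> Suc n" for j
    by (rule continuous_on_subset[OF Dcab[OF that]]) (use tb in auto)
  have Dd: "(Dx j has_real_derivative Dx (Suc j) \<tau>) (at \<tau>)" if "j \<le> n" "\<tau> \<in> {a<..<t}" for j \<tau>
  proof -
    have \<tau>: "\<tau> \<in> {a<..<b}" using that tb by auto
    have "(Dx j has_real_derivative Dx (Suc j) \<tau>) (at \<tau> within {a<..<b})"
      by (rule DERIV_subset[OF Dx_deriv[OF that(1)]]) (use \<tau> in auto)
    then show ?thesis unfolding at_within_open[OF \<tau> open_greaterThanLessThan] .
  qed
  have xc: "continuous_on {a..t} x" using Dc[of 0] Dx0 by simp
  define Sa where "Sa = (\<Sum>j\<le>n. h powr (be - real j) / Gamma (be - real j + 1) * Dx (n - j) a)"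
  define I1 where "I1 = integral {a..t} (\<lambda>\<tau>. (t - \<tau>) powr be * Dx (Suc n) \<tau>)"
  have S1: "((\<lambda>\<tau>. (t - \<tau>) powr (al - 1) / Gamma al * Dx 0 \<tau>) has_integral (Sa + I1 / Gamma (be + 1))) {a..t}"
    unfolding Sa_def I1_def h_def be_def using step1[where n=n and D=Dx, OF at al Dc Dd] by simp
  have RL: "RL_left_integral a \<alpha> x t = Sa + I1 / Gamma (be + 1)"
  proof -
    have "RL_left_integral a \<alpha> x t = 1 / Gamma al * integral {a..t} (\<lambda>\<tau>. (t - \<tau>) powr (al - 1) * x \<tau>)"
      unfolding RL_left_integral_def al_def[symmetric] using RL_conv[OF at al(1) xc] by simp
    also have "\<dots> = integral {a..t} (\<lambda>\<tau>. 1 / Gamma al * ((t - \<tau>) powr (al - 1) * x \<tau>))"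
      by simp
    also have "\<dots> = integral {a..t} (\<lambda>\<tau>. (t - \<tau>) powr (al - 1) / Gamma al * Dx 0 \<tau>)"
      using Dx0 by simp
    also have "\<dots> = Sa + I1 / Gamma (be + 1)" using S1 by (rule integral_unique)
    finally show ?thesis .
  qed
  define c where "c = (\<lambda>p. pochhammer (-be) p / fact p)"
  define cf where "cf = (\<lambda>p. c p * h powr (be - real p))"
  define pk where "pk = (\<lambda>j \<tau>. \<Sum>p\<le>N. cf p * ffc p j * (\<tau> - a)^(p - j))"
  define I2 where "I2 = integral {a..t} (\<lambda>\<tau>. pk 0 \<tau> * Dx (Suc n) \<tau>)"
  have S2: "I2 = (\<Sum>j\<le>n. (-1)^j * (pk j t * Dx (n-j) t - pk j a * Dx (n-j) a))
       - (-1)^n * integral {a..t} (\<lambda>\<tau>. pk (Suc n) \<tau> * Dx 0 \<tau>)"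
    unfolding I2_def pk_def by (rule step2[where n=n and D=Dx, OF at Dc Dd])
  have pkt: "pk j t = h powr al * h^(n - j) * (\<Sum>p\<le>N. c p * ffc p j)" if "j \<le> n" for j
  proof -
    have "pk j t = h powr (be - real j) * (\<Sum>p\<le>N. c p * ffc p j)"
      unfolding pk_def cf_def h_def[symmetric] using h0 by (rule pk_t)
    moreover have "h powr (be - real j) = h powr al * h^(n - j)"
    proof -
      have "h^(n - j) = h powr (real (n - j))" using h0 by (simp add: powr_realpow)
      moreover have "be - real j = al + real (n - j)" using that by (simp add: be_def of_nat_diff)
      ultimately show ?thesis by (simp add: powr_add)
    qed
    ultimately show ?thesis by simp
  qed
  have pka: "pk j a = pochhammer (-be) j * h powr (be - real j)" if "j \<le> n" for j
  proof -
    have "pk j a = cf j * fact j" unfolding pk_def using that nN by (intro pk_a) auto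
    then show ?thesis unfolding cf_def c_def by simp
  qed
  have Gb: "Gamma (be + 1) > 0" using be0 by simp
  define G where "G = Gamma (be + 1)"
  have G0: "G \<noteq> 0" using Gb by (simp add: G_def)
  have ii: "(\<Sum>j\<le>n. (-1)^j * (pk j a * Dx (n-j) a)) / G = Sa"
    unfolding Sa_def sum_divide_distrib
  proof (intro sum.cong refl)
    fix j assume "j \<in> {..n}"
    then have j: "j \<le> n" by simp
    have Q: "(-1)^j * pochhammer (-be) j * Gamma (be - real j + 1) = G"
      unfolding G_def by (rule Qlem[OF beI])
    show "(-1)^j * (pk j a * Dx (n-j) a) / G = h powr (be - real j) / Gamma (be - real j + 1) * Dx (n - j) a"
      unfolding pka[OF j] using Q G0 by (rule alg_ii)
  qed
  have i: "(\<Sum>j\<le>n. (-1)^j * (pk j t * Dx (n-j) t)) / G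
      = h powr al * (\<Sum>k = 0..n. A_coef n N al k * h ^ k * Dx k t)"
  proof -
    have "(\<Sum>j\<le>n. (-1)^j * (pk j t * Dx (n-j) t)) / G
        = (\<Sum>j\<le>n. h powr al * (A_coef n N al (n - j) * h ^ (n - j) * Dx (n - j) t))"
      unfolding sum_divide_distrib
    proof (intro sum.cong refl)
      fix j assume "j \<in> {..n}"
      then have j: "j \<le> n" by simp
      have A: "(-1)^j / G * (\<Sum>p\<le>N. c p * ffc p j) = A_coef n N al (n - j)"
        unfolding G_def c_def be_def by (rule A_ident[OF al j nN])
      show "(-1)^j * (pk j t * Dx (n-j) t) / G = h powr al * (A_coef n N al (n - j) * h ^ (n - j) * Dx (n - j) t)"
        unfolding pkt[OF j] A[symmetric] by (simp add: field_simps)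
    qed
    also have "\<dots> = h powr al * (\<Sum>j = 0..n. A_coef n N al (n + 0 - j) * h ^ (n + 0 - j) * Dx (n + 0 - j) t)"
      by (simp add: sum_distrib_left atMost_atLeast0)
    also have "(\<Sum>j = 0..n. A_coef n N al (n + 0 - j) * h ^ (n + 0 - j) * Dx (n + 0 - j) t) = (\<Sum>k = 0..n. A_coef n N al k * h ^ k * Dx k t)"
      by (rule sum.atLeastAtMost_rev[symmetric])
    finally show ?thesis .
  qed
  define W where "W = (\<lambda>p. integral {a..t} (\<lambda>\<tau>. (\<tau> - a)^(p - Suc n) * x \<tau>))"
  have V: "V_fun a x n p t = real (p - n) * W p" for p
  proof -
    have "(LBINT \<tau>:{a..t}. (\<tau> - a) ^ (p - n - 1) * x \<tau>) = integral {a..t} (\<lambda>\<tau>. (\<tau> - a) ^ (p - n - 1) * x \<tau>)"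
      by (intro LB_cont continuous_intros xc)
    then show ?thesis unfolding V_fun_def W_def by simp
  qed
  have iii: "- ((-1)^n) * integral {a..t} (\<lambda>\<tau>. pk (Suc n) \<tau> * Dx 0 \<tau>) / G
      = h powr al * (\<Sum>k = n + 1..N. B_coef n al k * h powr (real n - real k) * V_fun a x n k t)"
  proof -
    have "integral {a..t} (\<lambda>\<tau>. pk (Suc n) \<tau> * Dx 0 \<tau>) = (\<Sum>p\<in>{Suc n..N}. cf p * ffc p (Suc n) * W p)"
      unfolding pk_def W_def Dx0 by (rule pk_int[OF xc])
    then have "- ((-1)^n) * integral {a..t} (\<lambda>\<tau>. pk (Suc n) \<tau> * Dx 0 \<tau>) / G
        = (\<Sum>p\<in>{Suc n..N}. - ((-1)^n) * (cf p * ffc p (Suc n)) * W p / G)"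
      by (simp add: sum_distrib_left sum_divide_distrib mult.assoc)
    also have "\<dots> = (\<Sum>p\<in>{Suc n..N}. h powr al * (B_coef n al p * h powr (real n - real p) * V_fun a x n p t))"
    proof (intro sum.cong refl)
      fix p assume "p \<in> {Suc n..N}"
      then have p: "n + 1 \<le> p" by simp
      show "- ((-1)^n) * (cf p * ffc p (Suc n)) * W p / G = h powr al * (B_coef n al p * h powr (real n - real p) * V_fun a x n p t)"
        unfolding V cf_def c_def G_def be_def using B_ident[OF al p h0, of "W p"] by (simp add: mult.assoc)
    qed
    finally show ?thesis by (simp add: sum_distrib_left)
  qed
  define M where "M = h powr al * ((\<Sum>k = 0..n. A_coef n N al k * h ^ k * Dx k t)
              + (\<Sum>k = n + 1..N. B_coef n al k * h powr (real n - real k) * V_fun a x n k t))"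
  have MI2: "M = Sa + I2 / G"
  proof -
    have "I2 / G = (\<Sum>j\<le>n. (-1)^j * (pk j t * Dx (n-j) t)) / G - (\<Sum>j\<le>n. (-1)^j * (pk j a * Dx (n-j) a)) / G
        + (- ((-1)^n) * integral {a..t} (\<lambda>\<tau>. pk (Suc n) \<tau> * Dx 0 \<tau>) / G)"
      unfolding S2 right_diff_distrib sum_subtractf by (rule alg_I2)
    then show ?thesis unfolding i ii iii M_def by (simp add: algebra_simps)
  qed
  have RLM: "RL_left_integral a \<alpha> x t - M = (I1 - I2) / G"
    unfolding RL MI2 G_def by (simp add: diff_divide_distrib)
  define Rt where "Rt = (\<lambda>\<tau>. (t - \<tau>) powr be - (\<Sum>p\<le>N. pochhammer (-be) p / fact p * (t - a) powr (be - real p) * (\<tau> - a)^p))"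
  have pk0: "pk 0 \<tau> = (\<Sum>p\<le>N. pochhammer (-be) p / fact p * (t - a) powr (be - real p) * (\<tau> - a)^p)" for \<tau>
    unfolding pk_def cf_def c_def h_def by (simp add: ffc_def)
  have cRt: "continuous_on {a..t} Rt"
    unfolding Rt_def using be0 by (intro continuous_intros continuous_on_powr') auto
  have cK: "continuous_on {a..t} (\<lambda>\<tau>. (t - \<tau>) powr be)"
    using be0 by (intro continuous_intros continuous_on_powr') auto
  have J: "I1 - I2 = integral {a..t} (\<lambda>\<tau>. Rt \<tau> * Dx (Suc n) \<tau>)"
  proof -
    have "integral {a..t} (\<lambda>\<tau>. Rt \<tau> * Dx (Suc n) \<tau>) = integral {a..t} (\<lambda>\<tau>. (t - \<tau>) powr be * Dx (Suc n) \<tau> - pk 0 \<tau> * Dx (Suc n) \<tau>)"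
      unfolding Rt_def pk0 by (simp add: left_diff_distrib)
    also have "\<dots> = I1 - I2"
      unfolding I1_def I2_def pk0
      by (intro integral_diff integrable_continuous_interval continuous_intros cK Dc) auto
    finally show ?thesis by simp
  qed
  define L where "L = Sup ((\<lambda>\<tau>. \<bar>Dx (n + 1) \<tau>\<bar>) ` {a..t})"
  have Lb: "\<bar>Dx (Suc n) \<tau>\<bar> \<le> L" if "\<tau> \<in> {a..t}" for \<tau>
  proof -
    have "compact ((\<lambda>\<tau>. \<bar>Dx (n + 1) \<tau>\<bar>) ` {a..t})"
      by (intro compact_continuous_image continuous_intros) (use Dc[of "Suc n"] in auto)
    then have "bdd_above ((\<lambda>\<tau>. \<bar>Dx (n + 1) \<tau>\<bar>) ` {a..t})"
      by (intro bounded_imp_bdd_above compact_imp_bounded)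
    then show ?thesis unfolding L_def using that by (auto intro!: cSup_upper)
  qed
  have L0: "L \<ge> 0" using Lb[of a] at by auto
  define K where "K = pochhammer (-be) (Suc N)"
  have K0: "K \<noteq> 0"
  proof
    assume "K = 0"
    then obtain k where "-be = - of_nat k" unfolding K_def pochhammer_eq_0_iff by auto
    then have "be \<in> \<int>" by simp
    with beI show False by simp
  qed
  define Iv where "Iv = h powr (be + 1) * \<bar>K\<bar> / (fact (Suc N) * (be + 1))"
  have absR: "((\<lambda>\<tau>. \<bar>Rt \<tau>\<bar>) has_integral Iv) {a..t}"
  proof -
    have R: "(Rt has_integral h powr (be + 1) * K / (fact (Suc N) * (be + 1))) {a..t}"
      unfolding Rt_def K_def h_def by (rule Rint[OF at be0])
    have R2: "((\<lambda>\<tau>. K / \<bar>K\<bar> * Rt \<tau>) has_integral K / \<bar>K\<bar> * (h powr (be + 1) * K / (fact (Suc N) * (be + 1)))) {a..t}"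
      by (rule has_integral_mult_right[OF R])
    have v: "K / \<bar>K\<bar> * (h powr (be + 1) * K / (fact (Suc N) * (be + 1))) = Iv"
    proof -
      show ?thesis unfolding Iv_def by (rule alg_K[OF K0])
    qed
    have eq: "\<bar>Rt \<tau>\<bar> = K / \<bar>K\<bar> * Rt \<tau>" if "\<tau> \<in> {a..t} - {t}" for \<tau>
    proof -
      have "K * Rt \<tau> \<ge> 0" unfolding K_def Rt_def using taylor_sign[OF at be0] that by auto
      then have "\<bar>K * Rt \<tau>\<bar> = K * Rt \<tau>" by simp
      then have "\<bar>K\<bar> * \<bar>Rt \<tau>\<bar> = K * Rt \<tau>" by (simp add: abs_mult)
      then show ?thesis using K0 by (simp add: field_simps)
    qed
    show ?thesis using has_integral_spike_finite[of "{t}" "{a..t}" "\<lambda>\<tau>. \<bar>Rt \<tau>\<bar>", OF _ eq R2] v by simp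
  qed
  have LR: "((\<lambda>\<tau>. L * \<bar>Rt \<tau>\<bar>) has_integral L * Iv) {a..t}"
    by (rule has_integral_mult_right[OF absR])
  have Jb: "\<bar>I1 - I2\<bar> \<le> L * Iv"
  proof -
    have "\<bar>I1 - I2\<bar> = norm (integral {a..t} (\<lambda>\<tau>. Rt \<tau> * Dx (Suc n) \<tau>))" unfolding J by simp
    also have "\<dots> \<le> integral {a..t} (\<lambda>\<tau>. L * \<bar>Rt \<tau>\<bar>)"
    proof (rule integral_norm_bound_integral)
      show "(\<lambda>\<tau>. Rt \<tau> * Dx (Suc n) \<tau>) integrable_on {a..t}"
        by (intro integrable_continuous_interval continuous_intros cRt Dc) auto
      show "(\<lambda>\<tau>. L * \<bar>Rt \<tau>\<bar>) integrable_on {a..t}"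
        using LR by (auto simp: integrable_on_def)
      fix \<tau> assume "\<tau> \<in> {a..t}"
      then show "norm (Rt \<tau> * Dx (Suc n) \<tau>) \<le> L * \<bar>Rt \<tau>\<bar>"
      proof -
        have "\<bar>Rt \<tau>\<bar> * \<bar>Dx (Suc n) \<tau>\<bar> \<le> \<bar>Rt \<tau>\<bar> * L"
          using Lb[of \<tau>] \<open>\<tau> \<in> {a..t}\<close> by (intro mult_left_mono) auto
        then show ?thesis by (simp add: abs_mult mult.commute)
      qed
    qed
    also have "\<dots> = L * Iv" using LR by (rule integral_unique)
    finally show ?thesis .
  qed
  define E where "E = exp (be^2 + be) / (be * real N powr be)"
  have Q: "\<bar>K\<bar> / fact (Suc N) / (be + 1) \<le> E"
  proof -
    have nb: "real n < be" "be < real n + 1" using al by (auto simp: be_def)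
    have "\<bar>K\<bar> / fact (Suc N) \<le> be / (real n + 1) * ((real n + 2) / (real N + 2)) powr (be + 1)"
      unfolding K_def using nb nN by (intro Tbound) auto
    then have "\<bar>K\<bar> / fact (Suc N) / (be + 1) \<le> be / (real n + 1) * ((real n + 2) / (real N + 2)) powr (be + 1) / (be + 1)"
      using be0 by (intro divide_right_mono) auto
    also have "\<dots> \<le> E" unfolding E_def using nb N_ge by (intro final_num) auto
    finally show ?thesis .
  qed
  have Iv_le: "Iv \<le> h powr (be + 1) * E"
  proof -
    have "Iv = h powr (be + 1) * (\<bar>K\<bar> / fact (Suc N) / (be + 1))" unfolding Iv_def by simp
    also have "\<dots> \<le> h powr (be + 1) * E" using Q by (intro mult_left_mono) auto
    finally show ?thesis .
  qed
  have fin: "\<bar>RL_left_integral a \<alpha> x t - M\<bar> \<le> L * E / G * h powr (be + 1)"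
  proof -
    have "\<bar>RL_left_integral a \<alpha> x t - M\<bar> = \<bar>I1 - I2\<bar> / G" unfolding RLM using Gb by (simp add: G_def)
    also have "\<dots> \<le> L * Iv / G" using Jb Gb by (intro divide_right_mono) (auto simp: G_def)
    also have "\<dots> \<le> L * (h powr (be + 1) * E) / G" using Iv_le L0 Gb
      by (intro divide_right_mono mult_left_mono) (auto simp: G_def)
    also have "\<dots> = L * E / G * h powr (be + 1)" by simp
    finally show ?thesis .
  qed
  have lhs: "RL_left_integral a \<alpha> x t
           - (t - a) powr \<alpha> t *
             ((\<Sum>k = 0..n. A_coef n N (\<alpha> t) k * (t - a) ^ k * Dx k t)
              + (\<Sum>k = n + 1..N. B_coef n (\<alpha> t) k * (t - a) powr (real n - real k) * V_fun a x n k t))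
          = RL_left_integral a \<alpha> x t - M"
    unfolding M_def al_def h_def ..
  have rhs: "Sup ((\<lambda>\<tau>. \<bar>Dx (n + 1) \<tau>\<bar>) ` {a..t})
           * exp ((real n + \<alpha> t)\<^sup>2 + real n + \<alpha> t)
           / (Gamma (real n + 1 + \<alpha> t) * (real n + \<alpha> t) * real N powr (real n + \<alpha> t))
           * (t - a) powr (real n + 1 + \<alpha> t) = L * E / G * h powr (be + 1)"
  proof -
    have e1: "(real n + \<alpha> t)\<^sup>2 + real n + \<alpha> t = be^2 + be" by (simp add: be_def al_def)
    have e2: "real n + 1 + \<alpha> t = be + 1" by (simp add: be_def al_def)
    have e3: "real n + \<alpha> t = be" by (simp add: be_def al_def)
    have e4: "be\<^sup>2 + real n + \<alpha> t = be^2 + be" by (simp add: be_def al_def)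
    show ?thesis unfolding e2 e3 e4 L_def[symmetric] E_def G_def h_def by (simp add: mult_ac)
  qed
  show ?thesis unfolding lhs rhs by (rule fin)
qed

end
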